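(* Let $s_{1}, s_{2}, p_{1}, p_{2}, m, k \in \mathbb N$ with $m \geq s_{1}+s_{2}-1$. Then \begin{align*} \sum_{n=1}^\infty\frac{H_n^{(p_{1},s_{1})}H_n^{(p_{2},s_{2})}}{n^{m}\binom{n+k}{k}} &=\sum_{\ell_{1}=0}^{s_{1}-1}\sum_{t_{1}=0}^{s_{1}-1-\ell_{1}} \sum_{\ell_{2}=0}^{s_{2}-1}\sum_{t_{2}=0}^{s_{2}-1-\ell_{2}}a(s_{1},\ell_{1},t_{1})a(s_{2},\ell_{2},t_{2})\\ &\quad \times \sum_{r=1}^{k}(-1)^{r+1} r \binom{k}{r}\, T(p_{1}-\ell_{1},p_{2}-\ell_{2},m-t_{1}-t_{2},1,r,0)\,, \end{align*} where $T(q_1,q_2,u,1,r,0)=\sum_{n=1}^\infty\frac{H_n^{(q_{1})}H_n^{(q_{2})}}{n^{u}(n+r)}$. Consequently this sum can be expressed in terms of classical Euler sums, zeta values and generalized harmonic numbers.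
   Context: $\mathbb N=\{1,2,\dots\}$. For $n\in\mathbb N_0$ and $q\in\mathbb N$, $H_n^{(q)}=\sum_{j=1}^n j^{-q}$; for an integer $q\ge 0$, $H_n^{(-q)}$ denotes $\sum_{\ell=1}^n \ell^{q}$ (so $H_n^{(0)}=n$). Generalized hyperharmonic numbers: $H_n^{(p,1)}=H_n^{(p)}$, $H_n^{(p,r)}=\sum_{j=1}^n H_j^{(p,r-1)}$ for $r\ge2$. For $q_1,q_2\in\mathbb Z$, $u,r\in\mathbb N$, $T(q_{1},q_{2},u,1,r,0):=\sum_{n=1}^\infty\frac{H_n^{(q_{1})}H_n^{(q_{2})}}{n^{u}(n+r)}$. Bernoulli numbers $B_j^{+}$: $\frac{x}{1-e^{-x}}=\sum_{j\ge0}B_j^{+}\frac{x^j}{j!}$. The rational coefficients $a(r,m,j)$ ($r\in\mathbb N$, $0\le m\le r-1$, $0\le j\le r-1-m$) are defined by $a(1,0,0)=1$ and, for $r\ge1$: $a(r+1,r,0)=-\sum_{m=0}^{r-1} \frac{a(r,m,r-m-1)}{r-m}$; $a(r+1,m,\ell)=\sum_{j=\ell-1}^{r-1-m} \frac{a(r,m,j)}{j+1} \binom{j+1}{j-\ell+1}B_{j-\ell+1}^{+}$ for $0\leq m \leq r-1$, $1\leq \ell \leq r-m$; $a(r+1,m,0)=-\sum_{y=0}^{m} \sum_{j=\max\{0, m-y-1\}}^{r-1-y}a(r,y,j)D(r,m,j,y)$ for $0\leq m \leq r-1$, where $D(r,m,j,y)=\sum_{\ell=\max\{0, m-y-1\}}^{j}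 \frac{1}{j+1} \binom{j+1}{j-\ell}B_{j-\ell}^{+}\binom{\ell+1}{m-y}(-1)^{1+\ell-m+y}$. (These satisfy the known identity $H_n^{(p,r)}=\sum_{m=0}^{r-1}\sum_{j=0}^{r-1-m}a(r,m,j)n^jH_n^{(p-m)}$ for all $n,p\in\mathbb N$.) *)

theory Defs
  imports "HOL-Analysis.Analysis" "HOL-Computational_Algebra.Formal_Power_Series"
begin

(* Bernoulli numbers B_j^+ via  x/(1-e^{-x}) = sum_j B_j^+ x^j/j!  (formal power series) *)
definition bernoulli_plus :: "nat \<Rightarrow> real" where
  "bernoulli_plus j = fact j * fps_nth (fps_X / (1 - fps_exp (-1))) j"

definition harm :: "int \<Rightarrow> nat \<Rightarrow> real" where
  "harm q n = (if q \<ge> 0 then (\<Sum>j=1..n. 1 / (real j) ^ nat q)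
               else (\<Sum>l=1..n. (real l) ^ nat (- q)))"

(* generalized hyperharmonic numbers H_n^{(p,r)}, r \<ge> 1 (value at r = 0 irrelevant) *)
fun hyperharm :: "nat \<Rightarrow> nat \<Rightarrow> nat \<Rightarrow> real" where
  "hyperharm p 0 n = 0"
| "hyperharm p (Suc 0) n = harm (int p) n"
| "hyperharm p (Suc (Suc r)) n = (\<Sum>j=1..n. hyperharm p (Suc r) j)"

(* one step of the recursion: from a(r,.,.) to a(r+1,.,.), for r \<ge> 1 *)
definition a_step :: "nat \<Rightarrow> (nat \<Rightarrow> nat \<Rightarrow> real) \<Rightarrow> nat \<Rightarrow> nat \<Rightarrow> real" where
  "a_step r A m l =
     (if m = r \<and> l = 0 then
        - (\<Sum>m'=0..r-1. A m' (r - m' - 1) / real (r - m'))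
      else if m \<le> r - 1 \<and> 1 \<le> l \<and> l \<le> r - m then
        (\<Sum>j=l-1..r-1-m. A m j / real (j+1) * real ((j+1) choose (j+1-l)) * bernoulli_plus (j+1-l))
      else if m \<le> r - 1 \<and> l = 0 then
        - (\<Sum>y=0..m. \<Sum>j=m-y-1..r-1-y. A y j *
             (\<Sum>l'=m-y-1..j. 1 / real (j+1) * real ((j+1) choose (j-l')) * bernoulli_plus (j-l')
                 * real ((l'+1) choose (m-y)) * (-1) ^ (1 + l' + y - m)))
      else 0)"

(* coefficients a(r,m,j); zero outside the index range 0 \<le> m \<le> r-1, 0 \<le> j \<le> r-1-m *)
fun acoef :: "nat \<Rightarrow> nat \<Rightarrow> nat \<Rightarrow> real" where
  "acoef 0 m j = 0"
| "acoef (Suc r) m j =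
     (if r = 0 then (if m = 0 \<and> j = 0 then 1 else 0) else a_step r (acoef r) m j)"

definition Tsum :: "int \<Rightarrow> int \<Rightarrow> nat \<Rightarrow> nat \<Rightarrow> real" where
  "Tsum q1 q2 u r = (\<Sum>n. harm q1 (n+1) * harm q2 (n+1) / ((real (n+1)) ^ u * real (n + 1 + r)))"

end

theory Submission
  imports Defs
begin

definition Bf :: "real fps" where "Bf = fps_X / (1 - fps_exp (-1))"

lemma Bf_mult: "Bf * (1 - fps_exp (-1)) = fps_X"
proof -
  have ne: "(1 - fps_exp (-1) :: real fps) \<noteq> 0"
  proof
    assume "(1 - fps_exp (-1) :: real fps) = 0"
    hence "fps_nth (1 - fps_exp (-1) :: real fps) 1 = 0" by simp
    thus False by simp
  qed
  have "subdegree (1 - fps_exp (-1) :: real fps) \<le> 1"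
    by (rule subdegree_leI) simp
  hence "subdegree (1 - fps_exp (-1) :: real fps) \<le> subdegree (fps_X :: real fps)" by simp
  thus ?thesis unfolding Bf_def using fps_times_divide_eq[OF ne] by blast
qed

lemma bernoulli_plus_Bf: "bernoulli_plus j = fact j * fps_nth Bf j"
  by (simp add: bernoulli_plus_def Bf_def)

lemma bernoulli_plus_0: "bernoulli_plus 0 = 1"
proof -
  have "fps_nth (Bf * (1 - fps_exp (-1))) 1 = 1" using Bf_mult by simp
  hence "fps_nth Bf 0 = 1" by (simp add: fps_mult_nth)
  thus ?thesis by (simp add: bernoulli_plus_Bf)
qed

lemma exp_sum_telescope:
  "(\<Sum>i=1..n. fps_exp (real i)) * (1 - fps_exp (-1)) = fps_exp (real n) - 1"
proof (induction n)
  case 0 then show ?case by simp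
next
  case (Suc n)
  have "fps_exp (real (Suc n)) * fps_exp (-1) = fps_exp (real n)"
    by (simp flip: fps_exp_add_mult)
  then show ?case using Suc by (simp add: algebra_simps)
qed

definition fc :: "nat \<Rightarrow> nat \<Rightarrow> real" where
  "fc j l = 1 / real (j+1) * real ((j+1) choose (j-l)) * bernoulli_plus (j-l)"

definition FF :: "nat \<Rightarrow> real \<Rightarrow> real" where
  "FF j x = (\<Sum>l=0..j. fc j l * x ^ (l+1))"

lemma faulhaber: "(\<Sum>i=1..n. real i ^ j) = FF j (real n)"
proof -
  define S where "S = (\<Sum>i=1..n. fps_exp (real i) :: real fps)"
  have "S * fps_X = S * (Bf * (1 - fps_exp (-1)))" by (simp add: Bf_mult)
  also have "\<dots> = (S * (1 - fps_exp (-1))) * Bf" by (simp add: algebra_simps)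
  also have "\<dots> = (fps_exp (real n) - 1) * Bf"
    using exp_sum_telescope[of n] by (simp only: S_def)
  finally have eq: "fps_nth (S * fps_X) (j+1) = fps_nth ((fps_exp (real n) - 1) * Bf) (j+1)" by simp
  have l: "fps_nth (S * fps_X) (j+1) = (\<Sum>i=1..n. real i ^ j) / fact j"
    by (simp add: S_def fps_sum_nth sum_divide_distrib)
  have "fps_nth ((fps_exp (real n) - 1) * Bf) (j+1) = (\<Sum>i=0..j+1. fps_nth (fps_exp (real n) - 1) i * fps_nth Bf (j+1-i))"
    by (simp add: fps_mult_nth)
  also have "\<dots> = (\<Sum>i=1..j+1. fps_nth (fps_exp (real n) - 1) i * fps_nth Bf (j+1-i))"
    by (subst sum.atLeast_Suc_atMost) simp_all
  also have "\<dots> = (\<Sum>l=0..j. fps_nth (fps_exp (real n) - 1) (l+1) * fps_nth Bf (j-l))"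
    using sum.shift_bounds_cl_Suc_ivl[of "\<lambda>i. fps_nth (fps_exp (real n) - 1) i * fps_nth Bf (j+1-i)" 0 j] by simp
  also have "\<dots> = (\<Sum>l=0..j. real n ^ (l+1) / fact (l+1) * (bernoulli_plus (j-l) / fact (j-l)))"
    by (intro sum.cong refl) (simp add: bernoulli_plus_Bf algebra_simps)
  finally have r: "fps_nth ((fps_exp (real n) - 1) * Bf) (j+1) = \<dots>" .
  have "(\<Sum>i=1..n. real i ^ j) = fact j * (\<Sum>l=0..j. real n ^ (l+1) / fact (l+1) * (bernoulli_plus (j-l) / fact (j-l)))"
    using eq l r by (simp add: field_simps)
  also have "\<dots> = FF j (real n)"
    unfolding FF_def sum_distrib_left
  proof (intro sum.cong refl)
    fix l assume "l \<in> {0..j}"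
    hence lj: "l \<le> j" by simp
    have b: "real ((j+1) choose (j-l)) = fact (j+1) / (fact (j-l) * fact (l+1))"
      using lj by (subst binomial_fact) (auto simp: Suc_diff_le)
    have f: "(fact (j+1) :: real) = real (j+1) * fact j" by (simp del: of_nat_Suc)
    have aux: "\<And>a F X Y B N :: real. a > 0 \<Longrightarrow> X \<noteq> 0 \<Longrightarrow> Y \<noteq> 0 \<Longrightarrow>
       F * (N / Y * (B / X)) = 1 / a * (a * F / (X * Y)) * B * N" by (simp add: field_simps)
    show "fact j * (real n ^ (l+1) / fact (l+1) * (bernoulli_plus (j-l) / fact (j-l))) = fc j l * real n ^ (l+1)"
      unfolding fc_def b f by (rule aux) auto
  qed
  finally show ?thesis .
qed

lemma harm_powi: "harm q n = (\<Sum>l=1..n. real l powi (-q))"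
  unfolding harm_def by (auto intro!: sum.cong simp: power_int_def field_simps)

lemma harm_Suc: "harm q (Suc n) = harm q n + real (Suc n) powi (-q)"
  unfolding harm_powi by simp

lemma harm_0 [simp]: "harm q 0 = 0"
  unfolding harm_powi by simp

lemma FF_Suc: "FF j (real n + 1) = FF j (real n) + (real n + 1) ^ j"
  using faulhaber[where n="Suc n" and j=j] faulhaber[where n=n and j=j] by (simp add: add.commute)

lemma binom_shift: "(\<Sum>t=0..e. real (e choose t) * (-1)^(e-t) * x ^ t) = (x - 1 :: real) ^ e"
  using binomial_ring[of x "-1" e] by (simp add: algebra_simps atLeast0AtMost)

lemma basis:
  "(\<Sum>i=1..n. real i ^ j * harm Q i) = FF j (real n) * harm Q n -
     (\<Sum>l=0..j. fc j l * (\<Sum>t=0..l+1. real ((l+1) choose t) * (-1)^(l+1-t) * harm (Q - int t) n))"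
proof (induction n)
  case 0
  then show ?case by simp
next
  case (Suc n)
  define x where "x = real n + 1"
  have x0: "x \<noteq> 0" by (simp add: x_def)
  have hs: "harm (Q - int t) (Suc n) = harm (Q - int t) n + x powi (-Q) * x ^ t" for t
  proof -
    have "x powi (-(Q - int t)) = x powi (-Q + int t)" by simp
    also have "\<dots> = x powi (-Q) * x ^ t" using power_int_add[of x "-Q" "int t"] x0 by simp
    finally show ?thesis unfolding harm_Suc x_def by (simp add: add.commute)
  qed
  have "(\<Sum>l=0..j. fc j l * (\<Sum>t=0..l+1. real ((l+1) choose t) * (-1)^(l+1-t) * harm (Q - int t) (Suc n)))
      = (\<Sum>l=0..j. fc j l * (\<Sum>t=0..l+1. real ((l+1) choose t) * (-1)^(l+1-t) * harm (Q - int t) n))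
        + x powi (-Q) * (\<Sum>l=0..j. fc j l * (\<Sum>t=0..l+1. real ((l+1) choose t) * (-1)^(l+1-t) * x ^ t))"
    unfolding hs by (simp add: algebra_simps sum.distrib sum_distrib_left)
  also have "(\<Sum>l=0..j. fc j l * (\<Sum>t=0..l+1. real ((l+1) choose t) * (-1)^(l+1-t) * x ^ t)) = FF j (real n)"
    unfolding binom_shift FF_def by (simp add: x_def)
  finally have e: "(\<Sum>l=0..j. fc j l * (\<Sum>t=0..l+1. real ((l+1) choose t) * (-1)^(l+1-t) * harm (Q - int t) (Suc n)))
      = (\<Sum>l=0..j. fc j l * (\<Sum>t=0..l+1. real ((l+1) choose t) * (-1)^(l+1-t) * harm (Q - int t) n))
        + x powi (-Q) * FF j (real n)" .
  have h0: "harm Q (Suc n) = harm Q n + x powi (-Q)" unfolding harm_Suc x_def by (simp add: add.commute)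
  have f: "FF j (real (Suc n)) = FF j (real n) + x ^ j" using FF_Suc[of j n] by (simp add: x_def add.commute)
  have s: "(\<Sum>i=1..Suc n. real i ^ j * harm Q i) = (\<Sum>i=1..n. real i ^ j * harm Q i) + x ^ j * harm Q (Suc n)"
    by (simp add: x_def add.commute)
  show ?case
    unfolding s e h0 f Suc.IH by (simp add: algebra_simps)
qed

lemma tri_swap:
  fixes f :: "nat \<Rightarrow> nat \<Rightarrow> real"
  shows "(\<Sum>e=1..K+1. \<Sum>j=e-1..K. f e j) = (\<Sum>j=0..K. \<Sum>e=1..j+1. f e j)"
proof -
  have "(\<Sum>e=1..K+1. \<Sum>j=e-1..K. f e j) = (\<Sum>e\<in>{1..K+1}. \<Sum>j\<in>{j. j \<in> {0..K} \<and> e-1 \<le> j}. f e j)"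
    by (intro sum.cong) auto
  also have "\<dots> = (\<Sum>j\<in>{0..K}. \<Sum>e\<in>{e. e \<in> {1..K+1} \<and> e-1 \<le> j}. f e j)"
    by (rule sum.swap_restrict) auto
  also have "\<dots> = (\<Sum>j=0..K. \<Sum>e=1..j+1. f e j)"
    by (intro sum.cong) auto
  finally show ?thesis .
qed

lemma sum4:
  fixes f :: "'a \<Rightarrow> 'b \<Rightarrow> 'c \<Rightarrow> 'd \<Rightarrow> real"
  assumes "finite A" "\<And>a. finite (B a)" "\<And>a b. finite (C a b)" "\<And>a b c. finite (D a b c)"
  shows "(\<Sum>a\<in>A. \<Sum>b\<in>B a. \<Sum>c\<in>C a b. \<Sum>d\<in>D a b c. f a b c d)
       = (\<Sum>(a,b,c,d)\<in>(SIGMA a:A. SIGMA b:B a. SIGMA c:C a b. D a b c). f a b c d)"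
  by (simp add: sum.Sigma[symmetric] assms finite_SigmaI)

lemma step:
  fixes A :: "nat \<Rightarrow> nat \<Rightarrow> real" and q :: int
  assumes r: "r \<ge> 1"
  shows "(\<Sum>i=1..n. \<Sum>y=0..r-1. \<Sum>j=0..r-1-y. A y j * real i ^ j * harm (q - int y) i)
       = (\<Sum>M=0..r. \<Sum>e=0..r-M. a_step r A M e * real n ^ e * harm (q - int M) n)"
proof -
  define H where "H M = harm (q - int M) n" for M
  define W where "W y j l M = A y j * fc j l * real ((l+1) choose (M-y)) * (-1)^(l+1-(M-y)) * H M" for y j l M
  obtain r' where r': "r = Suc r'" using r by (cases r) auto
  have hb: "(\<Sum>i=1..n. real i ^ j * harm (q - int y) i) = FF j (real n) * H y
      - (\<Sum>l=0..j. fc j l * (\<Sum>t=0..l+1. real ((l+1) choose t) * (-1)^(l+1-t) * H (y+t)))" for y j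
    using basis[where n=n and j=j and Q="q - int y"] by (simp add: H_def algebra_simps)
  have "(\<Sum>i=1..n. \<Sum>y=0..r-1. \<Sum>j=0..r-1-y. A y j * real i ^ j * harm (q - int y) i)
      = (\<Sum>y=0..r-1. \<Sum>i=1..n. \<Sum>j=0..r-1-y. A y j * real i ^ j * harm (q - int y) i)"
    by (rule sum.swap)
  also have "\<dots> = (\<Sum>y=0..r-1. \<Sum>j=0..r-1-y. \<Sum>i=1..n. A y j * real i ^ j * harm (q - int y) i)"
    by (intro sum.cong refl sum.swap)
  also have "\<dots> = (\<Sum>y=0..r-1. \<Sum>j=0..r-1-y. A y j * (\<Sum>i=1..n. real i ^ j * harm (q - int y) i))"
    by (simp add: sum_distrib_left mult.assoc)
  also have "\<dots> = (\<Sum>y=0..r-1. \<Sum>j=0..r-1-y. A y j * FF j (real n) * H y)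
      - (\<Sum>y=0..r-1. \<Sum>j=0..r-1-y. \<Sum>l=0..j. \<Sum>t=0..l+1. A y j * fc j l * real ((l+1) choose t) * (-1)^(l+1-t) * H (y+t))"
    unfolding hb right_diff_distrib sum_subtractf sum_distrib_left by (simp only: mult.assoc)
  finally have LHS: "(\<Sum>i=1..n. \<Sum>y=0..r-1. \<Sum>j=0..r-1-y. A y j * real i ^ j * harm (q - int y) i)
      = (\<Sum>y=0..r-1. \<Sum>j=0..r-1-y. A y j * FF j (real n) * H y)
      - (\<Sum>y=0..r-1. \<Sum>j=0..r-1-y. \<Sum>l=0..j. \<Sum>t=0..l+1. A y j * fc j l * real ((l+1) choose t) * (-1)^(l+1-t) * H (y+t))" .

  have R1: "(\<Sum>M=0..r. \<Sum>e=0..r-M. a_step r A M e * real n ^ e * harm (q - int M) n)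
      = (\<Sum>M=0..r. a_step r A M 0 * H M) + (\<Sum>M=0..r. \<Sum>e=1..r-M. a_step r A M e * real n ^ e * H M)"
  proof -
    have "(\<Sum>e=0..r-M. a_step r A M e * real n ^ e * harm (q - int M) n)
        = a_step r A M 0 * H M + (\<Sum>e=1..r-M. a_step r A M e * real n ^ e * H M)" for M
      by (subst sum.atLeast_Suc_atMost) (simp_all add: H_def)
    thus ?thesis by (simp add: sum.distrib)
  qed

  have Q1: "(\<Sum>M=0..r. \<Sum>e=1..r-M. a_step r A M e * real n ^ e * H M)
      = (\<Sum>y=0..r-1. \<Sum>j=0..r-1-y. A y j * FF j (real n) * H y)"
  proof -
    have "(\<Sum>M=0..r. \<Sum>e=1..r-M. a_step r A M e * real n ^ e * H M)
        = (\<Sum>M=0..r'. \<Sum>e=1..r-M. a_step r A M e * real n ^ e * H M)"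
      using r' by (simp add: sum.atLeast0_atMost_Suc)
    also have "\<dots> = (\<Sum>M=0..r'. \<Sum>j=0..r'-M. A M j * FF j (real n) * H M)"
    proof (intro sum.cong[OF refl])
      fix M assume "M \<in> {0..r'}"
      hence M: "M \<le> r'" by simp
      have "(\<Sum>e=1..r-M. a_step r A M e * real n ^ e * H M)
          = (\<Sum>e=1..(r'-M)+1. (\<Sum>j=e-1..r'-M. A M j / real (j+1) * real ((j+1) choose (j+1-e)) * bernoulli_plus (j+1-e)) * real n ^ e * H M)"
        using M r' by (intro sum.cong) (auto simp: a_step_def Suc_diff_le)
      also have "\<dots> = (\<Sum>e=1..(r'-M)+1. \<Sum>j=e-1..r'-M. A M j / real (j+1) * real ((j+1) choose (j+1-e)) * bernoulli_plus (j+1-e) * real n ^ e * H M)"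
        by (simp add: sum_distrib_right)
      also have "\<dots> = (\<Sum>j=0..r'-M. \<Sum>e=1..j+1. A M j / real (j+1) * real ((j+1) choose (j+1-e)) * bernoulli_plus (j+1-e) * real n ^ e * H M)"
        by (rule tri_swap)
      also have "\<dots> = (\<Sum>j=0..r'-M. A M j * FF j (real n) * H M)"
      proof (intro sum.cong[OF refl])
        fix j
        have "(\<Sum>e=1..j+1. A M j / real (j+1) * real ((j+1) choose (j+1-e)) * bernoulli_plus (j+1-e) * real n ^ e * H M)
            = (\<Sum>l=0..j. A M j / real (j+1) * real ((j+1) choose (j+1-(l+1))) * bernoulli_plus (j+1-(l+1)) * real n ^ (l+1) * H M)"
          using sum.shift_bounds_cl_Suc_ivl[of "\<lambda>e. A M j / real (j+1) * real ((j+1) choose (j+1-e)) * bernoulli_plus (j+1-e) * real n ^ e * H M" 0 j]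
          by simp
        also have "\<dots> = A M j * FF j (real n) * H M"
          unfolding FF_def fc_def by (simp add: sum_distrib_left sum_distrib_right mult_ac)
        finally show "(\<Sum>e=1..j+1. A M j / real (j+1) * real ((j+1) choose (j+1-e)) * bernoulli_plus (j+1-e) * real n ^ e * H M)
            = A M j * FF j (real n) * H M" .
      qed
      finally show "(\<Sum>e=1..r-M. a_step r A M e * real n ^ e * H M) = (\<Sum>j=0..r'-M. A M j * FF j (real n) * H M)" .
    qed
    finally show ?thesis using r' by simp
  qed

  have a0: "a_step r A M 0 = -(\<Sum>y\<in>{y. y \<le> M \<and> y \<le> r-1}. \<Sum>j=M-y-1..r-1-y. \<Sum>l=M-y-1..j.
              A y j * fc j l * real ((l+1) choose (M-y)) * (-1)^(1+l+y-M))" if M: "M \<le> r" for M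
  proof (cases "M = r")
    case True
    have set: "{y. y \<le> M \<and> y \<le> r-1} = {0..r-1}" using True by auto
    have inner: "(\<Sum>j=M-y-1..r-1-y. \<Sum>l=M-y-1..j. A y j * fc j l * real ((l+1) choose (M-y)) * (-1)^(1+l+y-M))
        = A y (r-y-1) / real (r-y)" if y: "y \<le> r-1" for y
    proof -
      define k where "k = r-1-y"
      have e1: "r-1-y = k" "M-y-1 = k" "M - y = k+1" "r-y-1 = k" "r-y = k+1"
        using y r True by (auto simp: k_def)
      have e2: "1 + l + y - M = 0" if "l = k" for l using that y r True by (auto simp: k_def)
      have "(\<Sum>j=M-y-1..r-1-y. \<Sum>l=M-y-1..j. A y j * fc j l * real ((l+1) choose (M-y)) * (-1)^(1+l+y-M))
          = A y k * fc k k * real ((k+1) choose (k+1)) * (-1)^(1+k+y-M)"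
        unfolding e1 by simp
      also have "\<dots> = A y k / real (k+1)" using e2[of k] by (simp add: fc_def bernoulli_plus_0)
      also have "\<dots> = A y (r-y-1) / real (r-y)" using e1 by simp
      finally show ?thesis .
    qed
    have "a_step r A M 0 = -(\<Sum>m'=0..r-1. A m' (r-m'-1) / real (r-m'))"
      unfolding a_step_def True by simp
    also have "(\<Sum>m'=0..r-1. A m' (r-m'-1) / real (r-m')) = (\<Sum>y\<in>{y. y \<le> M \<and> y \<le> r-1}. \<Sum>j=M-y-1..r-1-y. \<Sum>l=M-y-1..j.
              A y j * fc j l * real ((l+1) choose (M-y)) * (-1)^(1+l+y-M))"
      unfolding set by (rule sum.cong[OF refl], rule inner[symmetric], simp)
    finally show ?thesis .
  next
    case False
    hence Mr: "M \<le> r-1" "M \<noteq> r" using M by auto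
    have set: "{y. y \<le> M \<and> y \<le> r-1} = {0..M}" using Mr by auto
    show ?thesis using Mr unfolding a_step_def set
      by (simp add: fc_def sum_distrib_left mult_ac)
  qed

  have Q2: "(\<Sum>M=0..r. a_step r A M 0 * H M)
      = -(\<Sum>y=0..r-1. \<Sum>j=0..r-1-y. \<Sum>l=0..j. \<Sum>t=0..l+1. A y j * fc j l * real ((l+1) choose t) * (-1)^(l+1-t) * H (y+t))"
  proof -
    have "(\<Sum>M=0..r. a_step r A M 0 * H M)
        = -(\<Sum>M\<in>{0..r}. \<Sum>y\<in>{y. y \<le> M \<and> y \<le> r-1}. \<Sum>j\<in>{M-y-1..r-1-y}. \<Sum>l\<in>{M-y-1..j}. W y j l M)"
    proof -
      have "a_step r A M 0 * H M = -(\<Sum>y\<in>{y. y \<le> M \<and> y \<le> r-1}. \<Sum>j\<in>{M-y-1..r-1-y}. \<Sum>l\<in>{M-y-1..j}. W y j l M)"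
        if "M \<in> {0..r}" for M
      proof -
        have eq: "(\<Sum>y\<in>{y. y \<le> M \<and> y \<le> r-1}. \<Sum>j\<in>{M-y-1..r-1-y}. \<Sum>l\<in>{M-y-1..j}. W y j l M)
           = (\<Sum>y\<in>{y. y \<le> M \<and> y \<le> r-1}. \<Sum>j=M-y-1..r-1-y. \<Sum>l=M-y-1..j.
              A y j * fc j l * real ((l+1) choose (M-y)) * (-1)^(1+l+y-M)) * H M"
          unfolding sum_distrib_right W_def
        proof (intro sum.cong[OF refl])
          fix y j l assume "y \<in> {y. y \<le> M \<and> y \<le> r-1}"
          hence "y \<le> M" by simp
          hence ex: "1+l+y-M = l+1-(M-y)" by arith
          show "A y j * fc j l * real ((l+1) choose (M-y)) * (-1)^(l+1-(M-y)) * H M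
              = A y j * fc j l * real ((l+1) choose (M-y)) * (-1)^(1+l+y-M) * H M" by (simp only: ex)
        qed
        have Mr: "M \<le> r" using that by simp
        show ?thesis unfolding eq a0[OF Mr] by (simp only: mult_minus_left)
      qed
      thus ?thesis by (simp add: sum_negf)
    qed
    also have "(\<Sum>M\<in>{0..r}. \<Sum>y\<in>{y. y \<le> M \<and> y \<le> r-1}. \<Sum>j\<in>{M-y-1..r-1-y}. \<Sum>l\<in>{M-y-1..j}. W y j l M)
        = (\<Sum>(M,y,j,l)\<in>(SIGMA M:{0..r}. SIGMA y:{y. y \<le> M \<and> y \<le> r-1}. SIGMA j:{M-y-1..r-1-y}. {M-y-1..j}). W y j l M)"
      by (rule sum4) auto
    also have "\<dots> = (\<Sum>(y,j,l,M)\<in>(SIGMA y:{0..r-1}. SIGMA j:{0..r-1-y}. SIGMA l:{0..j}. {y..y+l+1}). W y j l M)"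
      by (rule sum.reindex_bij_witness[where i="\<lambda>(y,j,l,M). (M,y,j,l)" and j="\<lambda>(M,y,j,l). (y,j,l,M)"])
         (insert r, auto split: prod.splits)
    also have "\<dots> = (\<Sum>y\<in>{0..r-1}. \<Sum>j\<in>{0..r-1-y}. \<Sum>l\<in>{0..j}. \<Sum>M\<in>{y..y+l+1}. W y j l M)"
      by (rule sum4[symmetric]) auto
    also have "\<dots> = (\<Sum>y=0..r-1. \<Sum>j=0..r-1-y. \<Sum>l=0..j. \<Sum>t=0..l+1. A y j * fc j l * real ((l+1) choose t) * (-1)^(l+1-t) * H (y+t))"
    proof (intro sum.cong[OF refl])
      fix y j l
      show "(\<Sum>M\<in>{y..y+l+1}. W y j l M) = (\<Sum>t=0..l+1. A y j * fc j l * real ((l+1) choose t) * (-1)^(l+1-t) * H (y+t))"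
        using sum.shift_bounds_cl_nat_ivl[of "W y j l" 0 y "l+1"] by (simp add: W_def add.commute)
    qed
    finally show ?thesis .
  qed
  show ?thesis unfolding LHS R1 Q1 Q2 by simp
qed

lemma hyper_expand:
  "hyperharm p (Suc r) n = (\<Sum>m=0..r. \<Sum>j=0..r-m. acoef (Suc r) m j * real n ^ j * harm (int p - int m) n)"
proof (induction r arbitrary: n)
  case 0
  then show ?case by simp
next
  case (Suc r)
  have "hyperharm p (Suc (Suc r)) n = (\<Sum>i=1..n. hyperharm p (Suc r) i)" by simp
  also have "\<dots> = (\<Sum>i=1..n. \<Sum>y=0..Suc r-1. \<Sum>j=0..Suc r-1-y. acoef (Suc r) y j * real i ^ j * harm (int p - int y) i)"
    using Suc.IH by simp
  also have "\<dots> = (\<Sum>M=0..Suc r. \<Sum>e=0..Suc r-M. a_step (Suc r) (acoef (Suc r)) M e * real n ^ e * harm (int p - int M) n)"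
    by (rule step) simp
  also have "\<dots> = (\<Sum>m=0..Suc r. \<Sum>j=0..Suc r-m. acoef (Suc (Suc r)) m j * real n ^ j * harm (int p - int m) n)"
    by simp
  finally show ?case .
qed

definition Pr :: "nat \<Rightarrow> real \<Rightarrow> real" where "Pr k x = (\<Prod>i=0..k. (x + real i))"

lemma Pr_Suc1: "Pr (Suc k) x = Pr k x * (x + real (Suc k))"
  unfolding Pr_def by (simp add: prod.atLeast0_atMost_Suc)

lemma Pr_Suc2: "Pr (Suc k) x = x * Pr k (x + 1)"
  unfolding Pr_def by (subst prod.atLeast0_atMost_Suc_shift) (simp add: o_def algebra_simps)

lemma Pr_pos: "x > 0 \<Longrightarrow> Pr k x > 0"
  unfolding Pr_def by (intro prod_pos) auto

lemma hsum:
  fixes x :: real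
  shows "x > 0 \<Longrightarrow> (\<Sum>r=0..k. (-1)^r * real (k choose r) / (x + real r)) = fact k / Pr k x"
proof (induction k arbitrary: x)
  case 0
  then show ?case by (simp add: Pr_def)
next
  case (Suc k)
  have x: "x > 0" by fact
  define h where "h y = (\<Sum>r=0..k. (-1)^r * real (k choose r) / (y + real r))" for y :: real
  have E0: "(\<Sum>r=0..Suc k. (-1)^r * real (Suc k choose r) / (x + real r))
      = 1 / x + (\<Sum>r=0..k. (-1)^(Suc r) * real (Suc k choose Suc r) / (x + real (Suc r)))"
    by (subst sum.atLeast0_atMost_Suc_shift) (simp add: o_def)
  have E1: "(\<Sum>r=0..k. (-1)^(Suc r) * real (Suc k choose Suc r) / (x + real (Suc r)))
      = (\<Sum>r=0..k. (-1)^(Suc r) * real (k choose Suc r) / (x + real (Suc r)))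
        - (\<Sum>r=0..k. (-1)^r * real (k choose r) / ((x + 1) + real r))"
    unfolding sum_subtractf[symmetric]
    by (intro sum.cong refl) (simp add: divide_inverse algebra_simps)
  have E2: "1 / x + (\<Sum>r=0..k. (-1)^(Suc r) * real (k choose Suc r) / (x + real (Suc r))) = h x"
  proof -
    have "h x = (\<Sum>r=0..Suc k. (-1)^r * real (k choose r) / (x + real r))"
      unfolding h_def by (simp add: sum.atLeast0_atMost_Suc)
    also have "\<dots> = 1 / x + (\<Sum>r=0..k. (-1)^(Suc r) * real (k choose Suc r) / (x + real (Suc r)))"
      by (subst sum.atLeast0_atMost_Suc_shift) (simp add: o_def)
    finally show ?thesis by simp
  qed
  have "(\<Sum>r=0..Suc k. (-1)^r * real (Suc k choose r) / (x + real r)) = h x - h (x+1)"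
    unfolding E0 E1 E2[symmetric] by (simp add: h_def)
  also have "\<dots> = fact k / Pr k x - fact k / Pr k (x+1)"
    unfolding h_def using Suc.IH[of x] Suc.IH[of "x+1"] x by simp
  also have "\<dots> = fact (Suc k) / Pr (Suc k) x"
  proof -
    have a: "Pr k x > 0" "Pr k (x+1) > 0" using x by (simp_all add: Pr_pos)
    have e1: "Pr (Suc k) x = Pr k x * (x + real (Suc k))" by (rule Pr_Suc1)
    have e2: "Pr (Suc k) x = x * Pr k (x + 1)" by (rule Pr_Suc2)
    have alg: "F / a - F / b = F * K / c" if "a > 0" "b > 0" "y > 0" "K > 0" "c = a * (y + K)" "c = y * b"
      for F a b c y K :: real
    proof -
      have yK: "y + K \<noteq> 0" using that by simp
      have "F * (y + K) / c = F * (y + K) / (a * (y + K))" using that by simp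
      also have "\<dots> = F / a" using yK by simp
      finally have 1: "F / a = F * (y + K) / c" by simp
      have "F * y / c = F * y / (b * y)" using that by (simp add: mult.commute)
      also have "\<dots> = F / b" using that by simp
      finally have 2: "F / b = F * y / c" by simp
      show ?thesis unfolding 1 2 by (simp add: diff_divide_distrib[symmetric] algebra_simps)
    qed
    have "fact k / Pr k x - fact k / Pr k (x+1) = fact k * real (Suc k) / Pr (Suc k) x"
      by (rule alg[OF a(1) a(2) x _ e1 e2]) simp
    thus ?thesis by simp
  qed
  finally show ?case .
qed

lemma binom_prod: "real ((N + k) choose k) * fact k = (\<Prod>i=1..k. (real N + real i))"
proof (induction k)
  case 0
  then show ?case by simp
next
  case (Suc k)
  have b: "real (Suc k) * real ((N + Suc k) choose Suc k) = real (N + Suc k) * real ((N + k) choose k)"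
  proof -
    have b0: "Suc k * (Suc (N+k) choose Suc k) = Suc (N+k) * ((N+k) choose k)" by (rule Suc_times_binomial)
    have "real (Suc k * (Suc (N+k) choose Suc k)) = real (Suc (N+k) * ((N+k) choose k))" using b0 by (simp only:)
    thus ?thesis by (simp only: of_nat_mult add_Suc_right)
  qed
  have "real ((N + Suc k) choose Suc k) * fact (Suc k) = (real (Suc k) * real ((N + Suc k) choose Suc k)) * fact k"
    by (simp add: algebra_simps)
  also have "\<dots> = real (N + Suc k) * (real ((N + k) choose k) * fact k)" unfolding b by simp
  also have "\<dots> = (\<Prod>i=1..Suc k. (real N + real i))" unfolding Suc.IH by (simp add: algebra_simps)
  finally show ?case .
qed

lemma Pr_alt: "Pr k x = x * (\<Prod>i=1..k. (x + real i))"
  unfolding Pr_def by (subst prod.atLeast_Suc_atMost) simp_all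

lemma pf:
  assumes "N > 0" "k \<ge> 1"
  shows "1 / real ((N + k) choose k) = (\<Sum>r=1..k. (-1)^(r+1) * real r * real (k choose r) / (real N + real r))"
proof -
  have x: "real N > 0" using assms by simp
  have P: "(\<Prod>i=1..k. (real N + real i)) > 0" by (intro prod_pos) auto
  have "(\<Sum>r=1..k. (-1)^(r+1) * real r * real (k choose r) / (real N + real r))
      = (\<Sum>r=0..k. (-1)^(r+1) * real r * real (k choose r) / (real N + real r))"
    by (subst (2) sum.atLeast_Suc_atMost) simp_all
  also have "\<dots> = (\<Sum>r=0..k. real N * ((-1)^r * real (k choose r) / (real N + real r)) - (-1)^r * real (k choose r))"
  proof (intro sum.cong refl)
    fix r
    have d: "real N + real r > 0" using x by simp
    show "(-1)^(r+1) * real r * real (k choose r) / (real N + real r)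
        = real N * ((-1)^r * real (k choose r) / (real N + real r)) - (-1)^r * real (k choose r)"
      using d by (simp add: field_simps)
  qed
  also have "\<dots> = real N * (\<Sum>r=0..k. (-1)^r * real (k choose r) / (real N + real r)) - (\<Sum>r=0..k. (-1)^r * real (k choose r))"
    by (simp only: sum_subtractf sum_distrib_left)
  also have "\<dots> = real N * (fact k / Pr k (real N)) - 0"
  proof -
    have hs: "(\<Sum>r=0..k. (-1)^r * real (k choose r) / (real N + real r)) = fact k / Pr k (real N)"
      by (rule hsum[OF x])
    have ca: "(\<Sum>r=0..k. (-1)^r * real (k choose r)) = 0"
      using choose_alternating_sum[of k, where 'a=real] assms(2) by (simp add: atLeast0AtMost)
    show ?thesis unfolding hs ca ..
  qed
  also have "\<dots> = fact k / (\<Prod>i=1..k. (real N + real i))"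
    unfolding Pr_alt using x by simp
  also have "\<dots> = 1 / real ((N + k) choose k)"
    unfolding binom_prod[symmetric] by simp
  finally show ?thesis ..
qed

lemma harmonic_le_ln: "N \<ge> 1 \<Longrightarrow> Harmonic_Numbers.harm N \<le> 1 + ln (real N)"
  using euler_mascheroni_sequence_decreasing[of 1 N] by (simp add: Harmonic_Numbers.harm_def)

lemma harm_bound:
  assumes "N \<ge> 1"
  shows "\<bar>harm q N\<bar> \<le> (1 + ln (real N)) * real N ^ nat (1 - q)"
proof (cases "q \<ge> 1")
  case True
  have h: "harm q N = (\<Sum>j=1..N. 1 / real j ^ nat q)" using True by (simp add: harm_def)
  have "0 \<le> harm q N" unfolding h by (intro sum_nonneg) simp
  moreover have "harm q N \<le> Harmonic_Numbers.harm N"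
    unfolding h Harmonic_Numbers.harm_def
  proof (intro sum_mono)
    fix j assume "j \<in> {1..N}"
    hence j: "real j \<ge> 1" by simp
    have "real j ^ 1 \<le> real j ^ nat q" using j True by (intro power_increasing) auto
    thus "1 / real j ^ nat q \<le> inverse (real j)" using j by (simp add: field_simps)
  qed
  moreover have "nat (1 - q) = 0" using True by simp
  ultimately show ?thesis using harmonic_le_ln[OF assms] by simp
next
  case False
  have h: "harm q N = (\<Sum>l=1..N. real l ^ nat (- q))" using False by (simp add: harm_def)
  have "harm q N \<le> (\<Sum>l=1..N. real N ^ nat (- q))" unfolding h
    by (intro sum_mono power_mono) auto
  also have "\<dots> = real N ^ nat (1 - q)"
  proof -
    have "nat (1 - q) = Suc (nat (- q))" using False by simp
    thus ?thesis by simp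
  qed
  finally have u: "harm q N \<le> real N ^ nat (1 - q)" .
  have "0 \<le> harm q N" unfolding h by (intro sum_nonneg) simp
  moreover have "real N ^ nat (1 - q) \<le> (1 + ln (real N)) * real N ^ nat (1 - q)"
    using assms by (simp add: mult_le_cancel_right1)
  ultimately show ?thesis using u by simp
qed

lemma harm_bound2:
  assumes "N \<ge> 1" "p \<ge> 1"
  shows "\<bar>harm (int p - int l) N\<bar> \<le> (1 + ln (real N)) * real N ^ l"
proof -
  have "\<bar>harm (int p - int l) N\<bar> \<le> (1 + ln (real N)) * real N ^ nat (1 - (int p - int l))"
    by (rule harm_bound[OF assms(1)])
  also have "\<dots> \<le> (1 + ln (real N)) * real N ^ l"
    using assms by (intro mult_left_mono power_increasing) auto
  finally show ?thesis .
qed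

lemma summable_lnsq: "summable (\<lambda>n. (1 + ln (real (n+1)))^2 / real (n+1)^2)"
proof (rule summable_comparison_test')
  show "summable (\<lambda>n. 16 * real (n+1) powr (-3/2))"
  proof -
    have "summable (\<lambda>n. real n powr (-3/2))" using summable_real_powr_iff[of "-3/2"] by simp
    hence "summable (\<lambda>n. real (Suc n) powr (-3/2))" by (subst summable_Suc_iff)
    hence "summable (\<lambda>n. real (n+1) powr (-3/2))" by simp
    thus ?thesis by (rule summable_mult)
  qed
next
  fix n :: nat
  define N where "N = real (n+1)"
  have N1: "N \<ge> 1" by (simp add: N_def)
  have q: "N powr (1/4) > 0" using N1 by simp
  have "ln N = 4 * ln (N powr (1/4))" using N1 by (simp add: ln_powr)
  also have "\<dots> \<le> 4 * (N powr (1/4) - 1)" using q by (intro mult_left_mono ln_le_minus_one) auto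
  finally have l: "ln N \<le> 4 * (N powr (1/4) - 1)" .
  have l0: "0 \<le> 1 + ln N" using N1 by simp
  have a: "1 + ln N \<le> 4 * N powr (1/4)" using l by simp
  have "(1 + ln N)^2 \<le> (4 * N powr (1/4))^2" using a l0 by (rule power_mono)
  also have "\<dots> = 16 * N powr (1/2)"
    using N1 by (simp add: power2_eq_square powr_add[symmetric])
  finally have b: "(1 + ln N)^2 \<le> 16 * N powr (1/2)" .
  have "norm ((1 + ln N)^2 / N^2) = (1 + ln N)^2 / N^2" by simp
  also have "\<dots> \<le> 16 * N powr (1/2) / N^2" using b N1 by (intro divide_right_mono) auto
  also have "\<dots> = 16 * N powr (-3/2)"
  proof -
    have p2: "N powr 2 = N^2" using N1 by (simp add: powr_numeral)
    have "N powr (-3/2) = N powr (1/2 - 2)" by simp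
    also have "\<dots> = N powr (1/2) / N powr 2" by (rule powr_diff)
    finally have "N powr (-3/2) = N powr (1/2) / N^2" unfolding p2 .
    thus ?thesis by simp
  qed
  finally show "norm ((1 + ln (real (n+1)))^2 / real (n+1)^2) \<le> 16 * real (n+1) powr (-3/2)"
    unfolding N_def .
qed

lemma summ_T:
  assumes "p1 \<ge> 1" "p2 \<ge> 1" "l1 + l2 + 1 \<le> u"
  shows "summable (\<lambda>n. harm (int p1 - int l1) (n+1) * harm (int p2 - int l2) (n+1) / ((real (n+1)) ^ u * real (n + 1 + r)))"
proof (rule summable_comparison_test'[OF summable_lnsq])
  fix n :: nat
  define N where "N = real (n+1)"
  define L where "L = 1 + ln N"
  define H1 where "H1 = harm (int p1 - int l1) (n+1)"
  define H2 where "H2 = harm (int p2 - int l2) (n+1)"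
  have N1: "N \<ge> 1" by (simp add: N_def)
  have L0: "L \<ge> 0" using N1 by (simp add: L_def)
  have h1: "\<bar>H1\<bar> \<le> L * N ^ l1" unfolding H1_def L_def N_def by (rule harm_bound2) (use assms in auto)
  have h2: "\<bar>H2\<bar> \<le> L * N ^ l2" unfolding H2_def L_def N_def by (rule harm_bound2) (use assms in auto)
  have num: "\<bar>H1 * H2\<bar> \<le> L^2 * N ^ (l1 + l2)"
  proof -
    have "\<bar>H1 * H2\<bar> = \<bar>H1\<bar> * \<bar>H2\<bar>" by (simp add: abs_mult)
    also have "\<dots> \<le> (L * N ^ l1) * (L * N ^ l2)"
      using h1 h2 by (intro mult_mono) (auto intro: order.trans[OF abs_ge_zero])
    also have "\<dots> = L^2 * N ^ (l1 + l2)" by (simp add: power_add power2_eq_square)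
    finally show ?thesis .
  qed
  have den: "N ^ (l1 + l2) * N^2 \<le> N ^ u * real (n + 1 + r)"
  proof -
    have "N ^ (l1 + l2) * N^2 = N ^ (l1 + l2 + 2)" by (simp add: power_add power2_eq_square)
    also have "\<dots> \<le> N ^ (u + 1)" using N1 assms(3) by (intro power_increasing) auto
    also have "\<dots> = N ^ u * N" by simp
    also have "\<dots> \<le> N ^ u * real (n + 1 + r)" using N1 by (intro mult_left_mono) (auto simp: N_def)
    finally show ?thesis .
  qed
  have dpos: "N ^ (l1 + l2) * N^2 > 0" using N1 by simp
  have "norm (H1 * H2 / (N ^ u * real (n + 1 + r))) = \<bar>H1 * H2\<bar> / (N ^ u * real (n + 1 + r))"
    using N1 by (simp add: abs_divide)
  also have "\<dots> \<le> L^2 * N ^ (l1 + l2) / (N ^ (l1 + l2) * N^2)"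
    using num den dpos L0 N1 by (intro frac_le) auto
  also have "\<dots> = L^2 / N^2" using N1 by (simp add: power2_eq_square)
  finally show "norm (harm (int p1 - int l1) (n+1) * harm (int p2 - int l2) (n+1) / ((real (n+1)) ^ u * real (n + 1 + r)))
      \<le> (1 + ln (real (n+1)))^2 / real (n+1)^2"
    unfolding H1_def H2_def L_def N_def .
qed

lemma term_eq:
  fixes N C a1 a2 H1 H2 :: real and c :: "nat \<Rightarrow> real"
  assumes N: "N > 0" and t: "t1 + t2 \<le> m" and C: "1 / C = (\<Sum>r=1..k. c r / (N + real r))"
  shows "a1 * N ^ t1 * H1 * (a2 * N ^ t2 * H2) / (N ^ m * C)
       = a1 * a2 * (\<Sum>r=1..k. c r * (H1 * H2 / (N ^ (m - t1 - t2) * (N + real r))))"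
proof -
  define u where "u = m - t1 - t2"
  have "(\<Sum>r=1..k. c r * (H1 * H2 / (N ^ u * (N + real r)))) = (\<Sum>r=1..k. H1 * H2 / N ^ u * (c r / (N + real r)))"
    by (intro sum.cong refl) (simp add: divide_inverse mult_ac)
  also have "\<dots> = H1 * H2 / N ^ u * (1 / C)" unfolding C by (simp add: sum_distrib_left)
  finally have R: "(\<Sum>r=1..k. c r * (H1 * H2 / (N ^ u * (N + real r)))) = H1 * H2 / N ^ u * (1 / C)" .
  have m: "N ^ m = N ^ u * N ^ t1 * N ^ t2"
  proof -
    have "m = u + t1 + t2" using t by (simp add: u_def)
    thus ?thesis by (simp add: power_add)
  qed
  show ?thesis
  proof (cases "C = 0")
    case True
    then show ?thesis unfolding u_def[symmetric] R by simp
  next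
    case False
    have "N ^ t1 \<noteq> 0" "N ^ t2 \<noteq> 0" "N ^ u \<noteq> 0" "N \<noteq> 0" using N by auto
    then show ?thesis unfolding u_def[symmetric] R m using False by (simp add: field_simps)
  qed
qed

lemma pt_lemma:
  fixes s1 s2 p1 p2 m k :: nat
  assumes "s1 \<ge> 1" "s2 \<ge> 1" "k \<ge> 1" "m \<ge> s1 + s2 - 1"
  shows "hyperharm p1 s1 (n+1) * hyperharm p2 s2 (n+1) / ((real (n+1)) ^ m * real ((n + 1 + k) choose k))
     = (\<Sum>l1=0..s1-1. \<Sum>t1=0..s1-1-l1. \<Sum>l2=0..s2-1. \<Sum>t2=0..s2-1-l2.
          acoef s1 l1 t1 * acoef s2 l2 t2 *
          (\<Sum>r=1..k. (-1) ^ (r+1) * real r * real (k choose r) *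
             (harm (int p1 - int l1) (n+1) * harm (int p2 - int l2) (n+1) / ((real (n+1)) ^ (m - t1 - t2) * real (n + 1 + r)))))"
proof -
  obtain a where a: "s1 = Suc a" using assms(1) by (cases s1) auto
  obtain b where b: "s2 = Suc b" using assms(2) by (cases s2) auto
  define N where "N = real (n+1)"
  have e1: "hyperharm p1 s1 (n+1) = (\<Sum>l1=0..s1-1. \<Sum>t1=0..s1-1-l1. acoef s1 l1 t1 * N ^ t1 * harm (int p1 - int l1) (n+1))"
    unfolding a N_def using hyper_expand[of p1 a "n+1"] by simp
  have e2: "hyperharm p2 s2 (n+1) = (\<Sum>l2=0..s2-1. \<Sum>t2=0..s2-1-l2. acoef s2 l2 t2 * N ^ t2 * harm (int p2 - int l2) (n+1))"
    unfolding b N_def using hyper_expand[of p2 b "n+1"] by simp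
  have C: "1 / real ((n + 1 + k) choose k) = (\<Sum>r=1..k. (-1)^(r+1) * real r * real (k choose r) / (N + real r))"
    unfolding N_def using pf[of "n+1" k] assms(3) by simp
  have "hyperharm p1 s1 (n+1) * hyperharm p2 s2 (n+1) / ((real (n+1)) ^ m * real ((n + 1 + k) choose k))
    = (\<Sum>l1=0..s1-1. \<Sum>t1=0..s1-1-l1. \<Sum>l2=0..s2-1. \<Sum>t2=0..s2-1-l2.
        acoef s1 l1 t1 * N ^ t1 * harm (int p1 - int l1) (n+1) * (acoef s2 l2 t2 * N ^ t2 * harm (int p2 - int l2) (n+1))
        / (N ^ m * real ((n + 1 + k) choose k)))"
    unfolding e1 e2 N_def[symmetric] sum_distrib_right unfolding sum_distrib_left sum_divide_distrib by (rule refl)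
  also have "\<dots> = (\<Sum>l1=0..s1-1. \<Sum>t1=0..s1-1-l1. \<Sum>l2=0..s2-1. \<Sum>t2=0..s2-1-l2.
        acoef s1 l1 t1 * acoef s2 l2 t2 *
        (\<Sum>r=1..k. (-1) ^ (r+1) * real r * real (k choose r) *
           (harm (int p1 - int l1) (n+1) * harm (int p2 - int l2) (n+1) / (N ^ (m - t1 - t2) * (N + real r)))))"
  proof (intro sum.cong[OF refl])
    fix l1 t1 l2 t2
    assume "l1 \<in> {0..s1-1}" "t1 \<in> {0..s1-1-l1}" "l2 \<in> {0..s2-1}" "t2 \<in> {0..s2-1-l2}"
    hence t: "t1 + t2 \<le> m" using assms by auto
    have N0: "N > 0" by (simp add: N_def)
    show "acoef s1 l1 t1 * N ^ t1 * harm (int p1 - int l1) (n+1) * (acoef s2 l2 t2 * N ^ t2 * harm (int p2 - int l2) (n+1))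
        / (N ^ m * real ((n + 1 + k) choose k))
        = acoef s1 l1 t1 * acoef s2 l2 t2 *
        (\<Sum>r=1..k. (-1) ^ (r+1) * real r * real (k choose r) *
           (harm (int p1 - int l1) (n+1) * harm (int p2 - int l2) (n+1) / (N ^ (m - t1 - t2) * (N + real r))))"
      by (rule term_eq[OF N0 t C])
  qed
  also have "\<dots> = (\<Sum>l1=0..s1-1. \<Sum>t1=0..s1-1-l1. \<Sum>l2=0..s2-1. \<Sum>t2=0..s2-1-l2.
        acoef s1 l1 t1 * acoef s2 l2 t2 *
        (\<Sum>r=1..k. (-1) ^ (r+1) * real r * real (k choose r) *
           (harm (int p1 - int l1) (n+1) * harm (int p2 - int l2) (n+1) / ((real (n+1)) ^ (m - t1 - t2) * real (n + 1 + r)))))"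
    by (simp add: N_def add_ac)
  finally show ?thesis .
qed

lemma sm_lemma:
  fixes s1 s2 p1 p2 m k :: nat
  assumes "p1 \<ge> 1" "p2 \<ge> 1" "s1 \<ge> 1" "s2 \<ge> 1" "m \<ge> s1 + s2 - 1"
  shows "(\<lambda>n. \<Sum>l1=0..s1-1. \<Sum>t1=0..s1-1-l1. \<Sum>l2=0..s2-1. \<Sum>t2=0..s2-1-l2.
          acoef s1 l1 t1 * acoef s2 l2 t2 *
          (\<Sum>r=1..k. (-1) ^ (r+1) * real r * real (k choose r) *
             (harm (int p1 - int l1) (n+1) * harm (int p2 - int l2) (n+1) / ((real (n+1)) ^ (m - t1 - t2) * real (n + 1 + r)))))
    sums (\<Sum>l1=0..s1-1. \<Sum>t1=0..s1-1-l1. \<Sum>l2=0..s2-1. \<Sum>t2=0..s2-1-l2.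
            acoef s1 l1 t1 * acoef s2 l2 t2 *
            (\<Sum>r=1..k. (-1) ^ (r+1) * real r * real (k choose r) *
               Tsum (int p1 - int l1) (int p2 - int l2) (m - t1 - t2) r))"
proof (intro sums_sum sums_mult)
  fix l1 t1 l2 t2 r
  assume "l1 \<in> {0..s1-1}" "t1 \<in> {0..s1-1-l1}" "l2 \<in> {0..s2-1}" "t2 \<in> {0..s2-1-l2}"
  hence u: "l1 + l2 + 1 \<le> m - t1 - t2" using assms by auto
  have S: "summable (\<lambda>n. harm (int p1 - int l1) (n+1) * harm (int p2 - int l2) (n+1) / ((real (n+1)) ^ (m - t1 - t2) * real (n + 1 + r)))"
    using summ_T[OF assms(1) assms(2) u] .
  show "(\<lambda>n. harm (int p1 - int l1) (n+1) * harm (int p2 - int l2) (n+1) / ((real (n+1)) ^ (m - t1 - t2) * real (n + 1 + r)))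
      sums Tsum (int p1 - int l1) (int p2 - int l2) (m - t1 - t2) r"
    unfolding Tsum_def using S by (rule summable_sums)
qed

theorem theorem3:
  fixes s1 s2 p1 p2 m k :: nat
  assumes "s1 \<ge> 1" "s2 \<ge> 1" "p1 \<ge> 1" "p2 \<ge> 1" "m \<ge> 1" "k \<ge> 1"
    and "m \<ge> s1 + s2 - 1"
  shows "(\<Sum>n. hyperharm p1 s1 (n+1) * hyperharm p2 s2 (n+1)
              / ((real (n+1)) ^ m * real ((n + 1 + k) choose k)))
       = (\<Sum>l1=0..s1-1. \<Sum>t1=0..s1-1-l1. \<Sum>l2=0..s2-1. \<Sum>t2=0..s2-1-l2.
            acoef s1 l1 t1 * acoef s2 l2 t2 *
            (\<Sum>r=1..k. (-1) ^ (r+1) * real r * real (k choose r) *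
               Tsum (int p1 - int l1) (int p2 - int l2) (m - t1 - t2) r))"
  unfolding pt_lemma[OF assms(1) assms(2) assms(6) assms(7)]
  by (rule sums_unique[OF sm_lemma[OF assms(3) assms(4) assms(1) assms(2) assms(7)], symmetric])

end
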